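(* Let $H$ be a Hopf algebra with antipode $S$, $C$ a coalgebra, and let $P(B,C,\psi)$ be a $(P,C)_\psi$-extension, where $P$ is moreover an $(H,C)$-bicomodule and a left $H$-comodule algebra. Suppose that either (a) there exists a colifting of the translation map $\tilde\tau:C\to P\otimes P$, $c\mapsto c^{\tilde{[1]}}\otimes c^{\tilde{[2]}}$, such that for all $c\in C$: $c^{\tilde{[1]}}{}_{(-1)}c^{\tilde{[2]}}{}_{(-1)}\otimes c^{\tilde{[1]}}{}_{(0)}\otimes c^{\tilde{[2]}}{}_{(0)}=1_H\otimes c^{\tilde{[1]}}\otimes c^{\tilde{[2]}}$; or (b) $P^C(B)$ is a $C$-coalgebra Galois extension and $B\subseteq{}^{\mathrm{co}H}P$. Then the entwining map $\psi$ commutes with the left $H$-coaction on $P$.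
   Context: An entwining structure $(P,C)_\psi$ consists of an algebra $P$, a coalgebra $C$ and a linear map $\psi:C\otimes P\to P\otimes C$, written $\psi(c\otimes p)=p_\alpha\otimes c^\alpha$, with $\psi(c\otimes pq)=p_\alpha q_\beta\otimes c^{\alpha\beta}$, $\psi(c\otimes 1)=1\otimes c$, $p_\alpha\otimes c^\alpha{}_{(1)}\otimes c^\alpha{}_{(2)}=p_{\alpha\beta}\otimes c_{(1)}{}^\beta\otimes c_{(2)}{}^\alpha$, $p_\alpha\varepsilon(c^\alpha)=\varepsilon(c)p$. $P$ is an entwined module if it has a right $C$-coaction $\rho^C(p)=p_{(0)}\otimes p_{(1)}$ with $\rho^C(pq)=p_{(0)}\psi(p_{(1)}\otimes q)$. A $(P,C)_\psi$-extension $P(B,C,\psi)$ means $P$ is an entwined module and $B=P^{\mathrm{co}C}=\{b\in P:\rho^C(bp)=b\rho^C(p)\ \forall p\}$. $P^C(B)$ is a $C$-coalgebra Galois extension if $P\otimes_BP\to P\otimes C$, $p\otimes_Bp'\mapsto pp'_{(0)}\otimes p'_{(1)}$ is bijective. Left coaction: $p\mapsto p_{(-1)}\otimes p_{(0)}$; ${}^{\mathrm{co}H}P=\{p:{}^H\rho(p)=1_H\otimes p\}$; $(H,C)$-bicomodule means commuting left $H$- and right $C$-coactions; left $H$-comodule algebra means the coaction is an algebra map. A colifting of the translation map is a linear $\tilde\tau:C\to P\otimes P$ with $c^{\tilde{[1]}}c^{\tilde{[2]}}{}_{(0)}\otimes c^{\tilde{[2]}}{}_{(1)}=1_P\otimes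 c$ for all $c$. $\psi$ commutes with the left $H$-coaction if $({}^H\rho\otimes C)(\psi(c\otimes p))=p_{(-1)}\otimes\psi(c\otimes p_{(0)})$ for all $c\in C$, $p\in P$. *)

theory Defs
  imports Complex_Main
begin

text \<open>
  An element of a tensor product V (x) W is represented by a finite
  list of pairs [(v1,w1),...,(vn,wn)] standing for v1 (x) w1 + ... + vn (x) wn; two such
  lists denote the same tensor iff every bilinear form V x W -> k takes the same value on
  them (the dual of V (x) W is the space of bilinear forms, and linear functionals separate
  points of a vector space).  Likewise for threefold tensors with trilinear forms.
  A linear map into a tensor product is given by a function returning representing lists,
  required to be linear modulo this identification; a linear map out of V (x) W is given by
  its (bi)linear action on pure tensors.  Sweedler sums are sums over these lists.
\<close>

definition bilinear_map ::
  "('k::field \<Rightarrow> 'a::ab_group_add \<Rightarrow> 'a) \<Rightarrow> ('k \<Rightarrow> 'b::ab_group_add \<Rightarrow> 'b)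
   \<Rightarrow> ('k \<Rightarrow> 'c::ab_group_add \<Rightarrow> 'c) \<Rightarrow> ('a \<Rightarrow> 'b \<Rightarrow> 'c) \<Rightarrow> bool" where
  "bilinear_map sA sB sC f \<longleftrightarrow>
     (\<forall>a. Vector_Spaces.linear sB sC (f a)) \<and> (\<forall>b. Vector_Spaces.linear sA sC (\<lambda>a. f a b))"

definition trilinear_form ::
  "('k::field \<Rightarrow> 'a::ab_group_add \<Rightarrow> 'a) \<Rightarrow> ('k \<Rightarrow> 'b::ab_group_add \<Rightarrow> 'b)
   \<Rightarrow> ('k \<Rightarrow> 'c::ab_group_add \<Rightarrow> 'c) \<Rightarrow> ('a \<Rightarrow> 'b \<Rightarrow> 'c \<Rightarrow> 'k) \<Rightarrow> bool" where
  "trilinear_form sA sB sC f \<longleftrightarrow>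
     (\<forall>b c. Vector_Spaces.linear sA (*) (\<lambda>a. f a b c)) \<and>
     (\<forall>a c. Vector_Spaces.linear sB (*) (\<lambda>b. f a b c)) \<and>
     (\<forall>a b. Vector_Spaces.linear sC (*) (\<lambda>c. f a b c))"

definition tsum2 :: "('a \<Rightarrow> 'b \<Rightarrow> 'k::comm_monoid_add) \<Rightarrow> ('a \<times> 'b) list \<Rightarrow> 'k" where
  "tsum2 \<Phi> xs = sum_list (map (\<lambda>(a, b). \<Phi> a b) xs)"

definition tsum3 :: "('a \<Rightarrow> 'b \<Rightarrow> 'c \<Rightarrow> 'k::comm_monoid_add) \<Rightarrow> ('a \<times> 'b \<times> 'c) list \<Rightarrow> 'k" where
  "tsum3 \<Phi> xs = sum_list (map (\<lambda>(a, b, c). \<Phi> a b c) xs)"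

definition teq2 :: "('k::field \<Rightarrow> 'a::ab_group_add \<Rightarrow> 'a) \<Rightarrow> ('k \<Rightarrow> 'b::ab_group_add \<Rightarrow> 'b)
   \<Rightarrow> ('a \<times> 'b) list \<Rightarrow> ('a \<times> 'b) list \<Rightarrow> bool" where
  "teq2 sA sB xs ys \<longleftrightarrow> (\<forall>\<Phi>. bilinear_map sA sB (*) \<Phi> \<longrightarrow> tsum2 \<Phi> xs = tsum2 \<Phi> ys)"

definition teq3 :: "('k::field \<Rightarrow> 'a::ab_group_add \<Rightarrow> 'a) \<Rightarrow> ('k \<Rightarrow> 'b::ab_group_add \<Rightarrow> 'b)
   \<Rightarrow> ('k \<Rightarrow> 'c::ab_group_add \<Rightarrow> 'c) \<Rightarrow> ('a \<times> 'b \<times> 'c) list \<Rightarrow> ('a \<times> 'b \<times> 'c) list \<Rightarrow> bool" where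
  "teq3 sA sB sC xs ys \<longleftrightarrow> (\<forall>\<Phi>. trilinear_form sA sB sC \<Phi> \<longrightarrow> tsum3 \<Phi> xs = tsum3 \<Phi> ys)"

definition tlinear :: "('k::field \<Rightarrow> 'v::ab_group_add \<Rightarrow> 'v) \<Rightarrow> ('k \<Rightarrow> 'a::ab_group_add \<Rightarrow> 'a)
   \<Rightarrow> ('k \<Rightarrow> 'b::ab_group_add \<Rightarrow> 'b) \<Rightarrow> ('v \<Rightarrow> ('a \<times> 'b) list) \<Rightarrow> bool" where
  "tlinear sV sA sB F \<longleftrightarrow>
     (\<forall>\<Phi>. bilinear_map sA sB (*) \<Phi> \<longrightarrow> Vector_Spaces.linear sV (*) (\<lambda>x. tsum2 \<Phi> (F x)))"

definition tbilinear :: "('k::field \<Rightarrow> 'v::ab_group_add \<Rightarrow> 'v) \<Rightarrow> ('k \<Rightarrow> 'w::ab_group_add \<Rightarrow> 'w)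
   \<Rightarrow> ('k \<Rightarrow> 'a::ab_group_add \<Rightarrow> 'a) \<Rightarrow> ('k \<Rightarrow> 'b::ab_group_add \<Rightarrow> 'b)
   \<Rightarrow> ('v \<Rightarrow> 'w \<Rightarrow> ('a \<times> 'b) list) \<Rightarrow> bool" where
  "tbilinear sV sW sA sB F \<longleftrightarrow>
     (\<forall>\<Phi>. bilinear_map sA sB (*) \<Phi> \<longrightarrow> bilinear_map sV sW (*) (\<lambda>x y. tsum2 \<Phi> (F x y)))"

definition algebra :: "('k::field \<Rightarrow> 'a::ab_group_add \<Rightarrow> 'a) \<Rightarrow> ('a \<Rightarrow> 'a \<Rightarrow> 'a) \<Rightarrow> 'a \<Rightarrow> bool" where
  "algebra s m u \<longleftrightarrow> vector_space s \<and> bilinear_map s s s m \<and>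
     (\<forall>x y z. m (m x y) z = m x (m y z)) \<and> (\<forall>x. m u x = x \<and> m x u = x)"

definition coalgebra :: "('k::field \<Rightarrow> 'c::ab_group_add \<Rightarrow> 'c) \<Rightarrow> ('c \<Rightarrow> ('c \<times> 'c) list)
   \<Rightarrow> ('c \<Rightarrow> 'k) \<Rightarrow> bool" where
  "coalgebra s \<Delta> \<epsilon> \<longleftrightarrow> vector_space s \<and> tlinear s s s \<Delta> \<and> Vector_Spaces.linear s (*) \<epsilon> \<and>
     (\<forall>c. teq3 s s s
        (concat (map (\<lambda>(c1, c2). map (\<lambda>(x, y). (x, y, c2)) (\<Delta> c1)) (\<Delta> c)))
        (concat (map (\<lambda>(c1, c2). map (\<lambda>(x, y). (c1, x, y)) (\<Delta> c2)) (\<Delta> c)))) \<and>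
     (\<forall>c. sum_list (map (\<lambda>(c1, c2). s (\<epsilon> c1) c2) (\<Delta> c)) = c) \<and>
     (\<forall>c. sum_list (map (\<lambda>(c1, c2). s (\<epsilon> c2) c1) (\<Delta> c)) = c)"

definition hopf_algebra :: "('k::field \<Rightarrow> 'h::ab_group_add \<Rightarrow> 'h) \<Rightarrow> ('h \<Rightarrow> 'h \<Rightarrow> 'h) \<Rightarrow> 'h
   \<Rightarrow> ('h \<Rightarrow> ('h \<times> 'h) list) \<Rightarrow> ('h \<Rightarrow> 'k) \<Rightarrow> ('h \<Rightarrow> 'h) \<Rightarrow> bool" where
  "hopf_algebra s m u \<Delta> \<epsilon> S \<longleftrightarrow> algebra s m u \<and> coalgebra s \<Delta> \<epsilon> \<and>
     (\<forall>x y. teq2 s s (\<Delta> (m x y))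
        (concat (map (\<lambda>(x1, x2). map (\<lambda>(y1, y2). (m x1 y1, m x2 y2)) (\<Delta> y)) (\<Delta> x)))) \<and>
     teq2 s s (\<Delta> u) [(u, u)] \<and>
     (\<forall>x y. \<epsilon> (m x y) = \<epsilon> x * \<epsilon> y) \<and> \<epsilon> u = 1 \<and>
     Vector_Spaces.linear s s S \<and>
     (\<forall>x. sum_list (map (\<lambda>(x1, x2). m (S x1) x2) (\<Delta> x)) = s (\<epsilon> x) u) \<and>
     (\<forall>x. sum_list (map (\<lambda>(x1, x2). m x1 (S x2)) (\<Delta> x)) = s (\<epsilon> x) u)"

definition entwining :: "('k::field \<Rightarrow> 'p::ab_group_add \<Rightarrow> 'p) \<Rightarrow> ('p \<Rightarrow> 'p \<Rightarrow> 'p) \<Rightarrow> 'p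
   \<Rightarrow> ('k \<Rightarrow> 'c::ab_group_add \<Rightarrow> 'c) \<Rightarrow> ('c \<Rightarrow> ('c \<times> 'c) list) \<Rightarrow> ('c \<Rightarrow> 'k)
   \<Rightarrow> ('c \<Rightarrow> 'p \<Rightarrow> ('p \<times> 'c) list) \<Rightarrow> bool" where
  "entwining sP mP uP sC \<Delta> \<epsilon> \<psi> \<longleftrightarrow> algebra sP mP uP \<and> coalgebra sC \<Delta> \<epsilon> \<and>
     tbilinear sC sP sP sC \<psi> \<and>
     (\<forall>c p q. teq2 sP sC (\<psi> c (mP p q))
        (concat (map (\<lambda>(p', c'). map (\<lambda>(q', c''). (mP p' q', c'')) (\<psi> c' q)) (\<psi> c p)))) \<and>
     (\<forall>c. teq2 sP sC (\<psi> c uP) [(uP, c)]) \<and>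
     (\<forall>c p. teq3 sP sC sC
        (concat (map (\<lambda>(p', c'). map (\<lambda>(x, y). (p', x, y)) (\<Delta> c')) (\<psi> c p)))
        (concat (map (\<lambda>(c1, c2). concat (map (\<lambda>(p', c2').
            map (\<lambda>(p'', c1'). (p'', c1', c2')) (\<psi> c1 p')) (\<psi> c2 p))) (\<Delta> c)))) \<and>
     (\<forall>c p. sum_list (map (\<lambda>(p', c'). sP (\<epsilon> c') p') (\<psi> c p)) = sP (\<epsilon> c) p)"

text \<open>Right C-comodule P, rho(p) = p_(0) (x) p_(1).\<close>
definition right_comodule :: "('k::field \<Rightarrow> 'p::ab_group_add \<Rightarrow> 'p) \<Rightarrow> ('k \<Rightarrow> 'c::ab_group_add \<Rightarrow> 'c)
   \<Rightarrow> ('c \<Rightarrow> ('c \<times> 'c) list) \<Rightarrow> ('c \<Rightarrow> 'k) \<Rightarrow> ('p \<Rightarrow> ('p \<times> 'c) list) \<Rightarrow> bool" where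
  "right_comodule sP sC \<Delta> \<epsilon> \<rho> \<longleftrightarrow> vector_space sP \<and> tlinear sP sP sC \<rho> \<and>
     (\<forall>p. teq3 sP sC sC
        (concat (map (\<lambda>(p0, p1). map (\<lambda>(x, y). (x, y, p1)) (\<rho> p0)) (\<rho> p)))
        (concat (map (\<lambda>(p0, p1). map (\<lambda>(x, y). (p0, x, y)) (\<Delta> p1)) (\<rho> p)))) \<and>
     (\<forall>p. sum_list (map (\<lambda>(p0, p1). sP (\<epsilon> p1) p0) (\<rho> p)) = p)"

text \<open>Left H-comodule P, lco(p) = p_(-1) (x) p_(0).\<close>
definition left_comodule :: "('k::field \<Rightarrow> 'h::ab_group_add \<Rightarrow> 'h) \<Rightarrow> ('h \<Rightarrow> ('h \<times> 'h) list)
   \<Rightarrow> ('h \<Rightarrow> 'k) \<Rightarrow> ('k \<Rightarrow> 'p::ab_group_add \<Rightarrow> 'p) \<Rightarrow> ('p \<Rightarrow> ('h \<times> 'p) list) \<Rightarrow> bool" where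
  "left_comodule sH \<Delta> \<epsilon> sP lco \<longleftrightarrow> vector_space sP \<and> tlinear sP sH sP lco \<and>
     (\<forall>p. teq3 sH sH sP
        (concat (map (\<lambda>(h, p0). map (\<lambda>(x, y). (x, y, p0)) (\<Delta> h)) (lco p)))
        (concat (map (\<lambda>(h, p0). map (\<lambda>(x, y). (h, x, y)) (lco p0)) (lco p)))) \<and>
     (\<forall>p. sum_list (map (\<lambda>(h, p0). sP (\<epsilon> h) p0) (lco p)) = p)"

definition entwined_module :: "('k::field \<Rightarrow> 'p::ab_group_add \<Rightarrow> 'p) \<Rightarrow> ('p \<Rightarrow> 'p \<Rightarrow> 'p)
   \<Rightarrow> ('k \<Rightarrow> 'c::ab_group_add \<Rightarrow> 'c) \<Rightarrow> ('c \<Rightarrow> ('c \<times> 'c) list) \<Rightarrow> ('c \<Rightarrow> 'k)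
   \<Rightarrow> ('c \<Rightarrow> 'p \<Rightarrow> ('p \<times> 'c) list) \<Rightarrow> ('p \<Rightarrow> ('p \<times> 'c) list) \<Rightarrow> bool" where
  "entwined_module sP mP sC \<Delta> \<epsilon> \<psi> \<rho> \<longleftrightarrow> right_comodule sP sC \<Delta> \<epsilon> \<rho> \<and>
     (\<forall>p q. teq2 sP sC (\<rho> (mP p q))
        (concat (map (\<lambda>(p0, p1). map (\<lambda>(q', c'). (mP p0 q', c')) (\<psi> p1 q)) (\<rho> p))))"

definition coinv :: "('k::field \<Rightarrow> 'p::ab_group_add \<Rightarrow> 'p) \<Rightarrow> ('p \<Rightarrow> 'p \<Rightarrow> 'p)
   \<Rightarrow> ('k \<Rightarrow> 'c::ab_group_add \<Rightarrow> 'c) \<Rightarrow> ('p \<Rightarrow> ('p \<times> 'c) list) \<Rightarrow> 'p set" where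
  "coinv sP mP sC \<rho> = {b. \<forall>p. teq2 sP sC (\<rho> (mP b p)) (map (\<lambda>(x, y). (mP b x, y)) (\<rho> p))}"

definition bicomodule :: "('k::field \<Rightarrow> 'h::ab_group_add \<Rightarrow> 'h) \<Rightarrow> ('h \<Rightarrow> ('h \<times> 'h) list)
   \<Rightarrow> ('h \<Rightarrow> 'k) \<Rightarrow> ('k \<Rightarrow> 'p::ab_group_add \<Rightarrow> 'p) \<Rightarrow> ('k \<Rightarrow> 'c::ab_group_add \<Rightarrow> 'c)
   \<Rightarrow> ('c \<Rightarrow> ('c \<times> 'c) list) \<Rightarrow> ('c \<Rightarrow> 'k)
   \<Rightarrow> ('p \<Rightarrow> ('h \<times> 'p) list) \<Rightarrow> ('p \<Rightarrow> ('p \<times> 'c) list) \<Rightarrow> bool" where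
  "bicomodule sH \<Delta>H \<epsilon>H sP sC \<Delta>C \<epsilon>C lco \<rho> \<longleftrightarrow>
     left_comodule sH \<Delta>H \<epsilon>H sP lco \<and> right_comodule sP sC \<Delta>C \<epsilon>C \<rho> \<and>
     (\<forall>p. teq3 sH sP sC
        (concat (map (\<lambda>(h, p0). map (\<lambda>(x, y). (h, x, y)) (\<rho> p0)) (lco p)))
        (concat (map (\<lambda>(p0, c). map (\<lambda>(h, x). (h, x, c)) (lco p0)) (\<rho> p))))"

definition comodule_algebra :: "('k::field \<Rightarrow> 'h::ab_group_add \<Rightarrow> 'h) \<Rightarrow> ('h \<Rightarrow> 'h \<Rightarrow> 'h) \<Rightarrow> 'h
   \<Rightarrow> ('h \<Rightarrow> ('h \<times> 'h) list) \<Rightarrow> ('h \<Rightarrow> 'k) \<Rightarrow> ('k \<Rightarrow> 'p::ab_group_add \<Rightarrow> 'p) \<Rightarrow> ('p \<Rightarrow> 'p \<Rightarrow> 'p) \<Rightarrow> 'p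
   \<Rightarrow> ('p \<Rightarrow> ('h \<times> 'p) list) \<Rightarrow> bool" where
  "comodule_algebra sH mH uH \<Delta>H \<epsilon>H sP mP uP lco \<longleftrightarrow>
     algebra sP mP uP \<and> left_comodule sH \<Delta>H \<epsilon>H sP lco \<and>
     (\<forall>p q. teq2 sH sP (lco (mP p q))
        (concat (map (\<lambda>(h, p0). map (\<lambda>(h', q0). (mH h h', mP p0 q0)) (lco q)) (lco p)))) \<and>
     teq2 sH sP (lco uP) [(uH, uP)]"

text \<open>Colifting of the translation map: tau(c) = c^[1] (x) c^[2] in P (x) P.\<close>
definition colifting :: "('k::field \<Rightarrow> 'p::ab_group_add \<Rightarrow> 'p) \<Rightarrow> ('p \<Rightarrow> 'p \<Rightarrow> 'p) \<Rightarrow> 'p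
   \<Rightarrow> ('k \<Rightarrow> 'c::ab_group_add \<Rightarrow> 'c) \<Rightarrow> ('p \<Rightarrow> ('p \<times> 'c) list) \<Rightarrow> ('c \<Rightarrow> ('p \<times> 'p) list) \<Rightarrow> bool" where
  "colifting sP mP uP sC \<rho> \<tau> \<longleftrightarrow> tlinear sC sP sP \<tau> \<and>
     (\<forall>c. teq2 sP sC
        (concat (map (\<lambda>(x, y). map (\<lambda>(y0, y1). (mP x y0, y1)) (\<rho> y)) (\<tau> c))) [(uP, c)])"

text \<open>Equality in P (x)_B P: agreement on all B-balanced bilinear forms.\<close>
definition teqB :: "('k::field \<Rightarrow> 'p::ab_group_add \<Rightarrow> 'p) \<Rightarrow> ('p \<Rightarrow> 'p \<Rightarrow> 'p) \<Rightarrow> 'p set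
   \<Rightarrow> ('p \<times> 'p) list \<Rightarrow> ('p \<times> 'p) list \<Rightarrow> bool" where
  "teqB sP mP B xs ys \<longleftrightarrow> (\<forall>\<Phi>. bilinear_map sP sP (*) \<Phi> \<and>
      (\<forall>b\<in>B. \<forall>p q. \<Phi> (mP p b) q = \<Phi> p (mP b q)) \<longrightarrow> tsum2 \<Phi> xs = tsum2 \<Phi> ys)"

definition can_map :: "('p \<Rightarrow> 'p \<Rightarrow> 'p) \<Rightarrow> ('p \<Rightarrow> ('p \<times> 'c) list) \<Rightarrow> ('p \<times> 'p) list \<Rightarrow> ('p \<times> 'c) list" where
  "can_map mP \<rho> xs = concat (map (\<lambda>(p, q). map (\<lambda>(q0, q1). (mP p q0, q1)) (\<rho> q)) xs)"

definition coalgebra_galois :: "('k::field \<Rightarrow> 'p::ab_group_add \<Rightarrow> 'p) \<Rightarrow> ('p \<Rightarrow> 'p \<Rightarrow> 'p) \<Rightarrow> 'p set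
   \<Rightarrow> ('k \<Rightarrow> 'c::ab_group_add \<Rightarrow> 'c) \<Rightarrow> ('p \<Rightarrow> ('p \<times> 'c) list) \<Rightarrow> bool" where
  "coalgebra_galois sP mP B sC \<rho> \<longleftrightarrow>
     (\<forall>z. \<exists>xs. teq2 sP sC (can_map mP \<rho> xs) z) \<and>
     (\<forall>xs ys. teq2 sP sC (can_map mP \<rho> xs) (can_map mP \<rho> ys) \<longrightarrow> teqB sP mP B xs ys)"

definition left_coinv :: "('k::field \<Rightarrow> 'h::ab_group_add \<Rightarrow> 'h) \<Rightarrow> 'h \<Rightarrow> ('k \<Rightarrow> 'p::ab_group_add \<Rightarrow> 'p)
   \<Rightarrow> ('p \<Rightarrow> ('h \<times> 'p) list) \<Rightarrow> 'p set" where
  "left_coinv sH uH sP lco = {p. teq2 sH sP (lco p) [(uH, p)]}"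

end

theory Submission
  imports Defs
begin

lemma tsum2_Nil[simp]: "tsum2 f [] = 0" by (simp add: tsum2_def)
lemma tsum2_Cons[simp]: "tsum2 f ((a,b)#xs) = f a b + tsum2 f xs" by (simp add: tsum2_def)
lemma tsum2_append[simp]: "tsum2 f (xs @ ys) = tsum2 f xs + tsum2 f ys" by (simp add: tsum2_def)
lemma tsum3_Nil[simp]: "tsum3 f [] = 0" by (simp add: tsum3_def)
lemma tsum3_Cons[simp]: "tsum3 f ((a,b,c)#xs) = f a b c + tsum3 f xs" by (simp add: tsum3_def)
lemma tsum3_append[simp]: "tsum3 f (xs @ ys) = tsum3 f xs + tsum3 f ys" by (simp add: tsum3_def)

lemma tsum2_concat[simp]: "tsum2 f (concat (map (case_prod G) xs)) = tsum2 (\<lambda>a b. tsum2 f (G a b)) xs"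
  by (induction xs) auto
lemma tsum3_concat[simp]: "tsum3 f (concat (map (case_prod G) xs)) = tsum2 (\<lambda>a b. tsum3 f (G a b)) xs"
  by (induction xs) auto
lemma tsum2_map[simp]: "tsum2 f (map (\<lambda>(a,b). (g a b, h a b)) xs) = tsum2 (\<lambda>a b. f (g a b) (h a b)) xs"
  by (induction xs) auto
lemma tsum3_map[simp]: "tsum3 f (map (\<lambda>(a,b). (g a b, h a b, k a b)) xs) = tsum2 (\<lambda>a b. f (g a b) (h a b) (k a b)) xs"
  by (induction xs) auto

lemma tsum3_Pair[simp]: "tsum3 f (map (Pair h) xs) = tsum2 (\<lambda>a b. f h a b) xs"
  by (induction xs) auto
lemma tsum2_add: "tsum2 (\<lambda>a b. f a b + g a b) xs = tsum2 f xs + tsum2 g xs"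
  by (induction xs) (auto simp: algebra_simps)
lemma tsum2_zero[simp]: "tsum2 (\<lambda>a b. 0) xs = 0"
  by (induction xs) auto
lemma tsum2_cmult: "tsum2 (\<lambda>a b. (k::'k::comm_ring) * f a b) xs = k * tsum2 f xs"
  by (induction xs) (auto simp: algebra_simps)
lemma tsum2_swap: "tsum2 (\<lambda>a b. tsum2 (\<lambda>c d. F a b c d) ys) xs = tsum2 (\<lambda>c d. tsum2 (\<lambda>a b. F a b c d) xs) ys"
  by (induction xs) (auto simp: tsum2_add)
lemma tsum2_cong: "(\<And>a b. (a,b) \<in> set xs \<Longrightarrow> f a b = g a b) \<Longrightarrow> tsum2 f xs = tsum2 g xs"
  by (induction xs) auto

definition LIN :: "('k::field \<Rightarrow> 'a::ab_group_add \<Rightarrow> 'a) \<Rightarrow> ('k \<Rightarrow> 'b::ab_group_add \<Rightarrow> 'b) \<Rightarrow> ('a \<Rightarrow> 'b) \<Rightarrow> bool" where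
  "LIN s1 s2 f \<longleftrightarrow> (\<forall>x y. f (x + y) = f x + f y) \<and> (\<forall>a x. f (s1 a x) = s2 a (f x))"
abbreviation LF where "LF s f \<equiv> LIN s (*) f"
definition BL where "BL sA sB F \<longleftrightarrow> (\<forall>a. LF sB (F a)) \<and> (\<forall>b. LF sA (\<lambda>a. F a b))"
definition TL where "TL sA sB sC F \<longleftrightarrow> (\<forall>b c. LF sA (\<lambda>a. F a b c)) \<and> (\<forall>a c. LF sB (\<lambda>b. F a b c))
   \<and> (\<forall>a b. LF sC (\<lambda>c. F a b c))"

lemma vs_field: "vector_space ((*) :: 'k::field \<Rightarrow> 'k \<Rightarrow> 'k)"
  by (unfold_locales) (auto simp: algebra_simps)

lemma linear_LIN: "vector_space s1 \<Longrightarrow> vector_space s2 \<Longrightarrow> Vector_Spaces.linear s1 s2 f \<longleftrightarrow> LIN s1 s2 f"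
  by (auto simp: Vector_Spaces.linear_iff LIN_def)
lemma linear_LF: "vector_space s1 \<Longrightarrow> Vector_Spaces.linear s1 (*) f \<longleftrightarrow> LF s1 f"
  using linear_LIN vs_field by blast
lemma bilinear_BL: "vector_space sA \<Longrightarrow> vector_space sB \<Longrightarrow> bilinear_map sA sB (*) F \<longleftrightarrow> BL sA sB F"
  by (simp add: bilinear_map_def BL_def linear_LF)
lemma trilinear_TL: "vector_space sA \<Longrightarrow> vector_space sB \<Longrightarrow> vector_space sC \<Longrightarrow> trilinear_form sA sB sC F \<longleftrightarrow> TL sA sB sC F"
  by (simp add: trilinear_form_def TL_def linear_LF)

lemma BLI: "(\<And>a. LF sB (\<lambda>b. F a b)) \<Longrightarrow> (\<And>b. LF sA (\<lambda>a. F a b)) \<Longrightarrow> BL sA sB F"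
  by (simp add: BL_def)
lemma TLI: "(\<And>b c. LF sA (\<lambda>a. F a b c)) \<Longrightarrow> (\<And>a c. LF sB (\<lambda>b. F a b c)) \<Longrightarrow> (\<And>a b. LF sC (\<lambda>c. F a b c)) \<Longrightarrow> TL sA sB sC F"
  by (simp add: TL_def)

lemma LF_tsum2I: "(\<And>a b. LF s (\<lambda>x. F x a b)) \<Longrightarrow> LF s (\<lambda>x. tsum2 (F x) xs)"
  unfolding LIN_def by (induction xs) (auto simp: algebra_simps)

lemma LIN_id: "LIN s s (\<lambda>x. x)" by (simp add: LIN_def)
lemma LIN_comp: "LIN s2 s3 f \<Longrightarrow> LIN s1 s2 g \<Longrightarrow> LIN s1 s3 (\<lambda>x. f (g x))" by (simp add: LIN_def)

lemma BL_1: "BL sA sB F \<Longrightarrow> LIN s sA g \<Longrightarrow> LF s (\<lambda>x. F (g x) b)"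
  unfolding BL_def using LIN_comp[of sA "(*)" "\<lambda>a. F a b"] by blast
lemma BL_2: "BL sA sB F \<Longrightarrow> LIN s sB g \<Longrightarrow> LF s (\<lambda>x. F a (g x))"
  unfolding BL_def using LIN_comp[of sB "(*)" "F a"] by blast
lemma TL_1: "TL sA sB sC F \<Longrightarrow> LIN s sA g \<Longrightarrow> LF s (\<lambda>x. F (g x) b c)"
  unfolding TL_def using LIN_comp[of sA "(*)" "\<lambda>a. F a b c"] by blast
lemma TL_2: "TL sA sB sC F \<Longrightarrow> LIN s sB g \<Longrightarrow> LF s (\<lambda>x. F a (g x) c)"
  unfolding TL_def using LIN_comp[of sB "(*)" "\<lambda>b. F a b c"] by blast
lemma TL_3: "TL sA sB sC F \<Longrightarrow> LIN s sC g \<Longrightarrow> LF s (\<lambda>x. F a b (g x))"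
  unfolding TL_def using LIN_comp[of sC "(*)" "\<lambda>c. F a b c"] by blast

lemma teq2D: "teq2 sA sB xs ys \<Longrightarrow> vector_space sA \<Longrightarrow> vector_space sB \<Longrightarrow> BL sA sB F \<Longrightarrow> tsum2 F xs = tsum2 F ys"
  by (simp add: teq2_def bilinear_BL)
lemma teq3D: "teq3 sA sB sC xs ys \<Longrightarrow> vector_space sA \<Longrightarrow> vector_space sB \<Longrightarrow> vector_space sC \<Longrightarrow> TL sA sB sC F \<Longrightarrow> tsum3 F xs = tsum3 F ys"
  by (simp add: teq3_def trilinear_TL)


locale setting =
  fixes sH :: "'k::field \<Rightarrow> 'h::ab_group_add \<Rightarrow> 'h"
    and mH :: "'h \<Rightarrow> 'h \<Rightarrow> 'h" and uH :: 'h
    and \<Delta>H :: "'h \<Rightarrow> ('h \<times> 'h) list" and \<epsilon>H :: "'h \<Rightarrow> 'k" and S :: "'h \<Rightarrow> 'h"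
    and sC :: "'k \<Rightarrow> 'c::ab_group_add \<Rightarrow> 'c"
    and \<Delta>C :: "'c \<Rightarrow> ('c \<times> 'c) list" and \<epsilon>C :: "'c \<Rightarrow> 'k"
    and sP :: "'k \<Rightarrow> 'p::ab_group_add \<Rightarrow> 'p"
    and mP :: "'p \<Rightarrow> 'p \<Rightarrow> 'p" and uP :: 'p
    and \<psi> :: "'c \<Rightarrow> 'p \<Rightarrow> ('p \<times> 'c) list"
    and \<rho> :: "'p \<Rightarrow> ('p \<times> 'c) list"
    and lco :: "'p \<Rightarrow> ('h \<times> 'p) list"
  assumes H: "hopf_algebra sH mH uH \<Delta>H \<epsilon>H S"
    and ent: "entwining sP mP uP sC \<Delta>C \<epsilon>C \<psi>"
    and entmod: "entwined_module sP mP sC \<Delta>C \<epsilon>C \<psi> \<rho>"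
    and bicom: "bicomodule sH \<Delta>H \<epsilon>H sP sC \<Delta>C \<epsilon>C lco \<rho>"
    and comalg: "comodule_algebra sH mH uH \<Delta>H \<epsilon>H sP mP uP lco"
begin

lemma algH: "algebra sH mH uH" using H by (simp add: hopf_algebra_def)
lemma algP: "algebra sP mP uP" using ent by (simp add: entwining_def)
lemma coalgC: "coalgebra sC \<Delta>C \<epsilon>C" using ent by (simp add: entwining_def)
lemma vsH: "vector_space sH" using algH by (simp add: algebra_def)
lemma vsP: "vector_space sP" using algP by (simp add: algebra_def)
lemma vsC: "vector_space sC" using coalgC by (simp add: coalgebra_def)

lemma mH_assoc: "mH (mH x y) z = mH x (mH y z)" using algH by (simp add: algebra_def)
lemma mP_assoc: "mP (mP x y) z = mP x (mP y z)" using algP by (simp add: algebra_def)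
lemma mH_unit[simp]: "mH uH x = x" "mH x uH = x" using algH by (simp_all add: algebra_def)
lemma mP_unit[simp]: "mP uP x = x" "mP x uP = x" using algP by (simp_all add: algebra_def)

lemma LIN_mP_l: "LIN s sP g \<Longrightarrow> LIN s sP (\<lambda>x. mP (g x) z)"
proof -
  assume g: "LIN s sP g"
  have "LIN sP sP (\<lambda>x. mP x z)" using algP vsP
    by (simp add: algebra_def bilinear_map_def linear_LIN)
  then show ?thesis using LIN_comp[OF _ g] by blast
qed
lemma LIN_mP_r: "LIN s sP g \<Longrightarrow> LIN s sP (\<lambda>x. mP z (g x))"
proof -
  assume g: "LIN s sP g"
  have "LIN sP sP (\<lambda>x. mP z x)" using algP vsP
    by (simp add: algebra_def bilinear_map_def linear_LIN)
  then show ?thesis using LIN_comp[OF _ g] by blast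
qed
lemma LIN_mH_l: "LIN s sH g \<Longrightarrow> LIN s sH (\<lambda>x. mH (g x) z)"
proof -
  assume g: "LIN s sH g"
  have "LIN sH sH (\<lambda>x. mH x z)" using algH vsH
    by (simp add: algebra_def bilinear_map_def linear_LIN)
  then show ?thesis using LIN_comp[OF _ g] by blast
qed
lemma LIN_mH_r: "LIN s sH g \<Longrightarrow> LIN s sH (\<lambda>x. mH z (g x))"
proof -
  assume g: "LIN s sH g"
  have "LIN sH sH (\<lambda>x. mH z x)" using algH vsH
    by (simp add: algebra_def bilinear_map_def linear_LIN)
  then show ?thesis using LIN_comp[OF _ g] by blast
qed

lemma lcomod: "left_comodule sH \<Delta>H \<epsilon>H sP lco" using bicom by (simp add: bicomodule_def)
lemma rcomod: "right_comodule sP sC \<Delta>C \<epsilon>C \<rho>" using bicom by (simp add: bicomodule_def)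

lemma LF_lco: "BL sH sP G \<Longrightarrow> LIN s sP g \<Longrightarrow> LF s (\<lambda>x. tsum2 G (lco (g x)))"
proof -
  assume G: "BL sH sP G" and g: "LIN s sP g"
  have "LF sP (\<lambda>x. tsum2 G (lco x))" using lcomod G vsH vsP
    by (simp add: left_comodule_def tlinear_def bilinear_BL linear_LF)
  then show ?thesis using LIN_comp[OF _ g] by blast
qed
lemma LF_rho: "BL sP sC G \<Longrightarrow> LIN s sP g \<Longrightarrow> LF s (\<lambda>x. tsum2 G (\<rho> (g x)))"
proof -
  assume G: "BL sP sC G" and g: "LIN s sP g"
  have "LF sP (\<lambda>x. tsum2 G (\<rho> x))" using rcomod G vsC vsP
    by (simp add: right_comodule_def tlinear_def bilinear_BL linear_LF)
  then show ?thesis using LIN_comp[OF _ g] by blast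
qed
lemma BL_psi: "BL sP sC G \<Longrightarrow> BL sC sP (\<lambda>x y. tsum2 G (\<psi> x y))"
  using ent vsC vsP by (simp add: entwining_def tbilinear_def bilinear_BL)
lemma LF_psi1: "BL sP sC G \<Longrightarrow> LIN s sC g \<Longrightarrow> LF s (\<lambda>x. tsum2 G (\<psi> (g x) p))"
  using BL_1[OF BL_psi] by blast
lemma LF_psi2: "BL sP sC G \<Longrightarrow> LIN s sP g \<Longrightarrow> LF s (\<lambda>x. tsum2 G (\<psi> c (g x)))"
  using BL_2[OF BL_psi] by blast

lemmas LFI = LF_tsum2I LF_lco LF_rho LF_psi1 LF_psi2 LIN_mP_l LIN_mP_r LIN_mH_l LIN_mH_r LIN_id BLI TLI

lemma lco_mult: "BL sH sP F \<Longrightarrow> tsum2 F (lco (mP p q)) =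
   tsum2 (\<lambda>h p0. tsum2 (\<lambda>h' q0. F (mH h h') (mP p0 q0)) (lco q)) (lco p)"
proof -
  assume F: "BL sH sP F"
  have "teq2 sH sP (lco (mP p q))
        (concat (map (\<lambda>(h, p0). map (\<lambda>(h', q0). (mH h h', mP p0 q0)) (lco q)) (lco p)))"
    using comalg unfolding comodule_algebra_def by blast
  from teq2D[OF this vsH vsP F] show ?thesis by simp
qed
lemma lco_unit: "BL sH sP F \<Longrightarrow> tsum2 F (lco uP) = F uH uP"
proof -
  assume F: "BL sH sP F"
  have "teq2 sH sP (lco uP) [(uH,uP)]"
    using comalg unfolding comodule_algebra_def by blast
  from teq2D[OF this vsH vsP F] show ?thesis by simp
qed
lemma bicom_eq: "TL sH sP sC F \<Longrightarrow> tsum2 (\<lambda>h p0. tsum2 (\<lambda>x y. F h x y) (\<rho> p0)) (lco p)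
   = tsum2 (\<lambda>p0 c. tsum2 (\<lambda>h x. F h x c) (lco p0)) (\<rho> p)"
proof -
  assume F: "TL sH sP sC F"
  have "teq3 sH sP sC
        (concat (map (\<lambda>(h, p0). map (\<lambda>(x, y). (h, x, y)) (\<rho> p0)) (lco p)))
        (concat (map (\<lambda>(p0, c). map (\<lambda>(h, x). (h, x, c)) (lco p0)) (\<rho> p)))"
    using bicom unfolding bicomodule_def by blast
  from teq3D[OF this vsH vsP vsC F] show ?thesis by simp
qed
lemma rho_mult: "BL sP sC F \<Longrightarrow> tsum2 F (\<rho> (mP p q)) =
   tsum2 (\<lambda>p0 p1. tsum2 (\<lambda>q' c'. F (mP p0 q') c') (\<psi> p1 q)) (\<rho> p)"
proof -
  assume F: "BL sP sC F"
  have "teq2 sP sC (\<rho> (mP p q))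
        (concat (map (\<lambda>(p0, p1). map (\<lambda>(q', c'). (mP p0 q', c')) (\<psi> p1 q)) (\<rho> p)))"
    using entmod unfolding entwined_module_def by blast
  from teq2D[OF this vsP vsC F] show ?thesis by simp
qed
lemma coinv_eq: "b \<in> coinv sP mP sC \<rho> \<Longrightarrow> BL sP sC F \<Longrightarrow> tsum2 F (\<rho> (mP b p)) = tsum2 (\<lambda>x y. F (mP b x) y) (\<rho> p)"
proof -
  assume b: "b \<in> coinv sP mP sC \<rho>" and F: "BL sP sC F"
  have "teq2 sP sC (\<rho> (mP b p)) (map (\<lambda>(x, y). (mP b x, y)) (\<rho> p))"
    using b unfolding coinv_def by blast
  from teq2D[OF this vsP vsC F] show ?thesis by simp
qed

lemma S1:
  assumes can: "\<And>\<Psi>. BL sP sC \<Psi> \<Longrightarrow> tsum2 (\<lambda>x y. tsum2 (\<lambda>y0 y1. \<Psi> (mP x y0) y1) (\<rho> y)) xs = \<Psi> uP c"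
    and \<Psi>: "BL sP sC \<Psi>"
  shows "tsum2 \<Psi> (\<psi> c p) = tsum2 (\<lambda>x y. tsum2 (\<lambda>q0 q1. \<Psi> (mP x q0) q1) (\<rho> (mP y p))) xs"
proof -
  have "tsum2 (\<lambda>x y. tsum2 (\<lambda>q0 q1. \<Psi> (mP x q0) q1) (\<rho> (mP y p))) xs
      = tsum2 (\<lambda>x y. tsum2 (\<lambda>y0 y1. tsum2 (\<lambda>p' c'. \<Psi> (mP (mP x y0) p') c') (\<psi> y1 p)) (\<rho> y)) xs"
    apply (rule tsum2_cong)
    apply (subst rho_mult)
     apply (auto intro!: LFI BL_1[OF \<Psi>] BL_2[OF \<Psi>] simp: mP_assoc)
    done
  also have "\<dots> = tsum2 (\<lambda>p' c'. \<Psi> (mP uP p') c') (\<psi> c p)"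
    by (rule can[of "\<lambda>w d. tsum2 (\<lambda>p' c'. \<Psi> (mP w p') c') (\<psi> d p)"])
      (auto intro!: LFI BL_1[OF \<Psi>] BL_2[OF \<Psi>])
  finally show ?thesis by simp
qed

lemma core:
  assumes can: "\<And>\<Psi>. BL sP sC \<Psi> \<Longrightarrow> tsum2 (\<lambda>x y. tsum2 (\<lambda>y0 y1. \<Psi> (mP x y0) y1) (\<rho> y)) xs = \<Psi> uP c"
    and ii: "\<And>\<Gamma>. TL sH sP sP \<Gamma> \<Longrightarrow> (\<forall>b\<in>coinv sP mP sC \<rho>. \<forall>h x y. \<Gamma> h (mP x b) y = \<Gamma> h x (mP b y)) \<Longrightarrow>
       tsum2 (\<lambda>x y. tsum2 (\<lambda>hx x0. tsum2 (\<lambda>hy y0. \<Gamma> (mH hx hy) x0 y0) (lco y)) (lco x)) xs = tsum2 (\<Gamma> uH) xs"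
    and \<Phi>: "TL sH sP sC \<Phi>"
  shows "tsum2 (\<lambda>p' c'. tsum2 (\<lambda>h x. \<Phi> h x c') (lco p')) (\<psi> c p)
       = tsum2 (\<lambda>h p0. tsum2 (\<lambda>x c'. \<Phi> h x c') (\<psi> c p0)) (lco p)"
proof -
  note R = LFI TL_1[OF \<Phi>] TL_2[OF \<Phi>] TL_3[OF \<Phi>]
  define \<Gamma> where "\<Gamma> = (\<lambda>h x0 y0. tsum2 (\<lambda>hp p0. tsum2 (\<lambda>z d. \<Phi> (mH h hp) (mP x0 z) d) (\<rho> (mP y0 p0))) (lco p))"
  have "tsum2 (\<lambda>p' c'. tsum2 (\<lambda>h x. \<Phi> h x c') (lco p')) (\<psi> c p)
     = tsum2 (\<lambda>x y. tsum2 (\<lambda>q0 q1. tsum2 (\<lambda>h z. \<Phi> h z q1) (lco (mP x q0))) (\<rho> (mP y p))) xs"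
    by (rule S1[OF can]) (auto intro!: R)
  also have "\<dots> = tsum2 (\<lambda>x y. tsum2 (\<lambda>q0 q1. tsum2 (\<lambda>hx x0. tsum2 (\<lambda>hq q00. \<Phi> (mH hx hq) (mP x0 q00) q1) (lco q0)) (lco x)) (\<rho> (mP y p))) xs"
    apply (intro tsum2_cong)
    apply (subst lco_mult)
     apply (auto intro!: R)
    done
  also have "\<dots> = tsum2 (\<lambda>x y. tsum2 (\<lambda>hx x0. tsum2 (\<lambda>q0 q1. tsum2 (\<lambda>hq q00. \<Phi> (mH hx hq) (mP x0 q00) q1) (lco q0)) (\<rho> (mP y p))) (lco x)) xs"
    by (intro tsum2_cong) (rule tsum2_swap)
  also have "\<dots> = tsum2 (\<lambda>x y. tsum2 (\<lambda>hx x0. tsum2 (\<lambda>hw w0. tsum2 (\<lambda>z d. \<Phi> (mH hx hw) (mP x0 z) d) (\<rho> w0)) (lco (mP y p))) (lco x)) xs"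
  proof (intro tsum2_cong)
    fix x y hx x0
    have "TL sH sP sC (\<lambda>h z d. \<Phi> (mH hx h) (mP x0 z) d)" by (auto intro!: R)
    from bicom_eq[OF this, of "mP y p"]
    show "tsum2 (\<lambda>q0 q1. tsum2 (\<lambda>hq q00. \<Phi> (mH hx hq) (mP x0 q00) q1) (lco q0)) (\<rho> (mP y p))
       = tsum2 (\<lambda>hw w0. tsum2 (\<lambda>z d. \<Phi> (mH hx hw) (mP x0 z) d) (\<rho> w0)) (lco (mP y p))"
      by simp
  qed
  also have "\<dots> = tsum2 (\<lambda>x y. tsum2 (\<lambda>hx x0. tsum2 (\<lambda>hy y0. \<Gamma> (mH hx hy) x0 y0) (lco y)) (lco x)) xs"
    unfolding \<Gamma>_def
    apply (intro tsum2_cong)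
    apply (subst lco_mult)
     apply (auto intro!: R simp: mH_assoc)
    done
  also have "\<dots> = tsum2 (\<Gamma> uH) xs"
  proof (rule ii)
    show "TL sH sP sP \<Gamma>" unfolding \<Gamma>_def by (auto intro!: R)
    show "\<forall>b\<in>coinv sP mP sC \<rho>. \<forall>h x y. \<Gamma> h (mP x b) y = \<Gamma> h x (mP b y)"
      unfolding \<Gamma>_def
      apply (intro ballI allI tsum2_cong)
      apply (simp only: mP_assoc)
      apply (subst coinv_eq, assumption)
       apply (auto intro!: R simp: mP_assoc)
      done
  qed
  also have "\<dots> = tsum2 (\<lambda>hp p0. tsum2 (\<lambda>x y. tsum2 (\<lambda>z d. \<Phi> hp (mP x z) d) (\<rho> (mP y p0))) xs) (lco p)"
    unfolding \<Gamma>_def by (simp add: tsum2_swap[of _ "lco p"])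
  also have "\<dots> = tsum2 (\<lambda>h p0. tsum2 (\<lambda>x c'. \<Phi> h x c') (\<psi> c p0)) (lco p)"
    apply (intro tsum2_cong)
    apply (subst S1[OF can])
     apply (auto intro!: R)
    done
  finally show ?thesis .
qed

lemma CM: "tsum2 \<Psi> (can_map mP \<rho> ws) = tsum2 (\<lambda>x y. tsum2 (\<lambda>y0 y1. \<Psi> (mP x y0) y1) (\<rho> y)) ws"
  by (simp add: can_map_def)

lemma teq2I: "(\<And>\<Psi>. BL sP sC \<Psi> \<Longrightarrow> tsum2 \<Psi> xs = tsum2 \<Psi> ys) \<Longrightarrow> teq2 sP sC xs ys"
  using vsP vsC by (simp add: teq2_def bilinear_BL)

lemma scale_first: "LIN sA (*) (\<lambda>u. F u v) \<Longrightarrow> F (sA a u) v = a * F u v"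
  by (simp add: LIN_def)

lemma tsum2_scale: "(\<And>v. LIN sA (*) (\<lambda>u. F u v)) \<Longrightarrow> tsum2 F (map (\<lambda>(u,v). (sA a u, v)) zs) = a * tsum2 F zs"
  by (induction zs) (auto simp: scale_first algebra_simps)

lemma tsum2_scale': "(\<And>v. LIN sA (*) (\<lambda>u. F u v)) \<Longrightarrow> tsum2 (\<lambda>u v. F (sA a u) v) zs = a * tsum2 F zs"
  by (induction zs) (auto simp: scale_first algebra_simps)

lemma galois_ii:
  assumes gal: "coalgebra_galois sP mP B sC \<rho>"
    and can_xs: "\<And>\<Psi>. BL sP sC \<Psi> \<Longrightarrow> tsum2 (\<lambda>x y. tsum2 (\<lambda>y0 y1. \<Psi> (mP x y0) y1) (\<rho> y)) xs = \<Psi> uP c"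
    and \<Gamma>: "TL sH sP sP \<Gamma>" and bal: "\<forall>b\<in>B. \<forall>h x y. \<Gamma> h (mP x b) y = \<Gamma> h x (mP b y)"
  shows "tsum2 (\<lambda>x y. tsum2 (\<lambda>hx x0. tsum2 (\<lambda>hy y0. \<Gamma> (mH hx hy) x0 y0) (lco y)) (lco x)) xs = tsum2 (\<Gamma> uH) xs"
proof -
  have BLG: "BL sP sP (\<Gamma> h)" for h using \<Gamma> by (simp add: TL_def BL_def)
  have injD: "tsum2 (\<Gamma> h) ws = tsum2 (\<Gamma> h) zs" if "teq2 sP sC (can_map mP \<rho> ws) (can_map mP \<rho> zs)" for h ws zs
  proof -
    have "teqB sP mP B ws zs" using gal that unfolding coalgebra_galois_def by blast
    then show ?thesis using BLG[of h] bal vsP unfolding teqB_def by (simp add: bilinear_BL)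
  qed
  define inv where "inv x d = (SOME ys. teq2 sP sC (can_map mP \<rho> ys) [(x,d)])" for x d
  have inv_spec: "teq2 sP sC (can_map mP \<rho> (inv x d)) [(x,d)]" for x d
  proof -
    have "\<exists>ys. teq2 sP sC (can_map mP \<rho> ys) [(x,d)]" using gal unfolding coalgebra_galois_def by blast
    then show ?thesis unfolding inv_def by (rule someI_ex)
  qed
  have inv_CM: "tsum2 (\<lambda>u v. tsum2 (\<lambda>y0 y1. \<Psi> (mP u y0) y1) (\<rho> v)) (inv x d) = \<Psi> x d" if "BL sP sC \<Psi>" for \<Psi> x d
    using teq2D[OF inv_spec[of x d] vsP vsC that] by (simp add: CM)
  define \<Gamma>' where "\<Gamma>' h x d = tsum2 (\<Gamma> h) (inv x d)" for h x d
  have G'eq: "\<Gamma>' h x d = tsum2 (\<Gamma> h) ws" if "teq2 sP sC (can_map mP \<rho> ws) [(x,d)]" for h x d ws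
  proof -
    have "teq2 sP sC (can_map mP \<rho> (inv x d)) (can_map mP \<rho> ws)"
    proof (rule teq2I)
      fix \<Psi> assume \<Psi>: "BL sP sC \<Psi>"
      show "tsum2 \<Psi> (can_map mP \<rho> (inv x d)) = tsum2 \<Psi> (can_map mP \<rho> ws)"
        using teq2D[OF inv_spec[of x d] vsP vsC \<Psi>] teq2D[OF that vsP vsC \<Psi>] by simp
    qed
    then show ?thesis unfolding \<Gamma>'_def by (rule injD)
  qed
  have claimA: "tsum2 (\<Gamma> h) zs = tsum2 (\<lambda>x y. tsum2 (\<lambda>y0 y1. \<Gamma>' h (mP x y0) y1) (\<rho> y)) zs" for h zs
  proof -
    define ws where "ws = concat (map (\<lambda>(x,d). inv x d) (can_map mP \<rho> zs))"
    have "teq2 sP sC (can_map mP \<rho> ws) (can_map mP \<rho> zs)"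
    proof (rule teq2I)
      fix \<Psi> assume \<Psi>: "BL sP sC \<Psi>"
      show "tsum2 \<Psi> (can_map mP \<rho> ws) = tsum2 \<Psi> (can_map mP \<rho> zs)"
      proof -
        have "tsum2 \<Psi> (can_map mP \<rho> ws) = tsum2 (\<lambda>x d. tsum2 \<Psi> (can_map mP \<rho> (inv x d))) (can_map mP \<rho> zs)"
          unfolding ws_def can_map_def by simp
        also have "\<dots> = tsum2 \<Psi> (can_map mP \<rho> zs)" by (simp add: CM inv_CM[OF \<Psi>])
        finally show ?thesis .
      qed
    qed
    from injD[OF this, of h] have "tsum2 (\<Gamma> h) zs = tsum2 (\<Gamma> h) ws" by simp
    also have "\<dots> = tsum2 (\<Gamma>' h) (can_map mP \<rho> zs)"
      unfolding ws_def tsum2_concat \<Gamma>'_def by simp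
    finally show ?thesis by (simp add: CM)
  qed
  have TLG': "TL sH sP sC \<Gamma>'"
  proof (rule TLI)
    show "LF sH (\<lambda>h. \<Gamma>' h x d)" for x d unfolding \<Gamma>'_def by (auto intro!: LFI TL_1[OF \<Gamma>])
    show "LF sP (\<lambda>x. \<Gamma>' h x d)" for h d
      unfolding LIN_def
    proof (intro conjI allI)
      fix x y
      have "teq2 sP sC (can_map mP \<rho> (inv x d @ inv y d)) [(x + y, d)]"
      proof (rule teq2I)
        fix \<Psi> assume \<Psi>: "BL sP sC \<Psi>"
        then have "LF sP (\<lambda>u. \<Psi> u d)" by (simp add: BL_def)
        then show "tsum2 \<Psi> (can_map mP \<rho> (inv x d @ inv y d)) = tsum2 \<Psi> [(x + y, d)]"
          by (simp add: CM inv_CM[OF \<Psi>] LIN_def)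
      qed
      from G'eq[OF this] show "\<Gamma>' h (x + y) d = \<Gamma>' h x d + \<Gamma>' h y d" by (simp add: \<Gamma>'_def)
    next
      fix a x
      have "teq2 sP sC (can_map mP \<rho> (map (\<lambda>(u,v). (sP a u, v)) (inv x d))) [(sP a x, d)]"
      proof (rule teq2I)
        fix \<Psi> assume \<Psi>: "BL sP sC \<Psi>"
        have "tsum2 \<Psi> (can_map mP \<rho> (map (\<lambda>(u,v). (sP a u, v)) (inv x d)))
          = a * tsum2 (\<lambda>u v. tsum2 (\<lambda>y0 y1. \<Psi> (mP u y0) y1) (\<rho> v)) (inv x d)"
          unfolding CM by (rule tsum2_scale) (auto intro!: LFI BL_1[OF \<Psi>])
        also have "\<dots> = \<Psi> (sP a x) d" using \<Psi> by (simp add: inv_CM BL_def LIN_def)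
        finally show "tsum2 \<Psi> (can_map mP \<rho> (map (\<lambda>(u,v). (sP a u, v)) (inv x d))) = tsum2 \<Psi> [(sP a x, d)]"
          by simp
      qed
      from G'eq[OF this] show "\<Gamma>' h (sP a x) d = a * \<Gamma>' h x d"
        unfolding \<Gamma>'_def using tsum2_scale'[of sP "\<Gamma> h" a] BLG[unfolded BL_def] by simp
    qed
    show "LF sC (\<lambda>d. \<Gamma>' h x d)" for h x
      unfolding LIN_def
    proof (intro conjI allI)
      fix d e
      have "teq2 sP sC (can_map mP \<rho> (inv x d @ inv x e)) [(x, d + e)]"
      proof (rule teq2I)
        fix \<Psi> assume \<Psi>: "BL sP sC \<Psi>"
        then have "LF sC (\<Psi> x)" by (simp add: BL_def)
        then show "tsum2 \<Psi> (can_map mP \<rho> (inv x d @ inv x e)) = tsum2 \<Psi> [(x, d + e)]"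
          by (simp add: CM inv_CM[OF \<Psi>] LIN_def)
      qed
      from G'eq[OF this] show "\<Gamma>' h x (d + e) = \<Gamma>' h x d + \<Gamma>' h x e" by (simp add: \<Gamma>'_def)
    next
      fix a d
      have "teq2 sP sC (can_map mP \<rho> (map (\<lambda>(u,v). (sP a u, v)) (inv x d))) [(x, sC a d)]"
      proof (rule teq2I)
        fix \<Psi> assume \<Psi>: "BL sP sC \<Psi>"
        have "tsum2 \<Psi> (can_map mP \<rho> (map (\<lambda>(u,v). (sP a u, v)) (inv x d)))
          = a * tsum2 (\<lambda>u v. tsum2 (\<lambda>y0 y1. \<Psi> (mP u y0) y1) (\<rho> v)) (inv x d)"
          unfolding CM by (rule tsum2_scale) (auto intro!: LFI BL_1[OF \<Psi>])
        also have "\<dots> = \<Psi> x (sC a d)" using \<Psi> by (simp add: inv_CM BL_def LIN_def)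
        finally show "tsum2 \<Psi> (can_map mP \<rho> (map (\<lambda>(u,v). (sP a u, v)) (inv x d))) = tsum2 \<Psi> [(x, sC a d)]"
          by simp
      qed
      from G'eq[OF this] show "\<Gamma>' h x (sC a d) = a * \<Gamma>' h x d"
        unfolding \<Gamma>'_def using tsum2_scale'[of sP "\<Gamma> h" a] BLG[unfolded BL_def] by simp
    qed
  qed
  note R = LFI TL_1[OF TLG'] TL_2[OF TLG'] TL_3[OF TLG']
  have "tsum2 (\<lambda>x y. tsum2 (\<lambda>hx x0. tsum2 (\<lambda>hy y0. \<Gamma> (mH hx hy) x0 y0) (lco y)) (lco x)) xs
     = tsum2 (\<lambda>x y. tsum2 (\<lambda>hx x0. tsum2 (\<lambda>hy y0. tsum2 (\<lambda>q0 q1. \<Gamma>' (mH hx hy) (mP x0 q0) q1) (\<rho> y0)) (lco y)) (lco x)) xs"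
    apply (intro tsum2_cong)
    using claimA[of _ "[(_,_)]"] by simp
  also have "\<dots> = tsum2 (\<lambda>x y. tsum2 (\<lambda>hx x0. tsum2 (\<lambda>y0 y1. tsum2 (\<lambda>hy y00. \<Gamma>' (mH hx hy) (mP x0 y00) y1) (lco y0)) (\<rho> y)) (lco x)) xs"
  proof (intro tsum2_cong)
    fix x y hx x0
    have "TL sH sP sC (\<lambda>h z d. \<Gamma>' (mH hx h) (mP x0 z) d)" by (auto intro!: R)
    from bicom_eq[OF this, of y]
    show "tsum2 (\<lambda>hy y0. tsum2 (\<lambda>q0 q1. \<Gamma>' (mH hx hy) (mP x0 q0) q1) (\<rho> y0)) (lco y)
      = tsum2 (\<lambda>y0 y1. tsum2 (\<lambda>hy y00. \<Gamma>' (mH hx hy) (mP x0 y00) y1) (lco y0)) (\<rho> y)"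
      by simp
  qed
  also have "\<dots> = tsum2 (\<lambda>x y. tsum2 (\<lambda>y0 y1. tsum2 (\<lambda>hx x0. tsum2 (\<lambda>hy y00. \<Gamma>' (mH hx hy) (mP x0 y00) y1) (lco y0)) (lco x)) (\<rho> y)) xs"
    by (intro tsum2_cong) (rule tsum2_swap)
  also have "\<dots> = tsum2 (\<lambda>x y. tsum2 (\<lambda>y0 y1. tsum2 (\<lambda>h w. \<Gamma>' h w y1) (lco (mP x y0))) (\<rho> y)) xs"
    apply (intro tsum2_cong)
    apply (subst lco_mult)
     apply (auto intro!: R)
    done
  also have "\<dots> = tsum2 (\<lambda>h w. \<Gamma>' h w c) (lco uP)"
    by (rule can_xs[of "\<lambda>w d. tsum2 (\<lambda>h w'. \<Gamma>' h w' d) (lco w)"]) (auto intro!: R)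
  also have "\<dots> = \<Gamma>' uH uP c"
    by (rule lco_unit) (auto intro!: R)
  also have "\<dots> = tsum2 (\<Gamma> uH) xs"
    unfolding claimA by (rule can_xs[symmetric]) (auto intro!: R)
  finally show ?thesis .
qed

end
theorem mainTheorem7:
  fixes sH :: "'k::field \<Rightarrow> 'h::ab_group_add \<Rightarrow> 'h"
    and mH :: "'h \<Rightarrow> 'h \<Rightarrow> 'h" and uH :: 'h
    and \<Delta>H :: "'h \<Rightarrow> ('h \<times> 'h) list" and \<epsilon>H :: "'h \<Rightarrow> 'k" and S :: "'h \<Rightarrow> 'h"
    and sC :: "'k \<Rightarrow> 'c::ab_group_add \<Rightarrow> 'c"
    and \<Delta>C :: "'c \<Rightarrow> ('c \<times> 'c) list" and \<epsilon>C :: "'c \<Rightarrow> 'k"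
    and sP :: "'k \<Rightarrow> 'p::ab_group_add \<Rightarrow> 'p"
    and mP :: "'p \<Rightarrow> 'p \<Rightarrow> 'p" and uP :: 'p
    and \<psi> :: "'c \<Rightarrow> 'p \<Rightarrow> ('p \<times> 'c) list"
    and \<rho> :: "'p \<Rightarrow> ('p \<times> 'c) list"
    and lco :: "'p \<Rightarrow> ('h \<times> 'p) list"
    and B :: "'p set"
  assumes H: "hopf_algebra sH mH uH \<Delta>H \<epsilon>H S"
    and ent: "entwining sP mP uP sC \<Delta>C \<epsilon>C \<psi>"
    and entmod: "entwined_module sP mP sC \<Delta>C \<epsilon>C \<psi> \<rho>"
    and B_def: "B = coinv sP mP sC \<rho>"
    and bicom: "bicomodule sH \<Delta>H \<epsilon>H sP sC \<Delta>C \<epsilon>C lco \<rho>"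
    and comalg: "comodule_algebra sH mH uH \<Delta>H \<epsilon>H sP mP uP lco"
    and cases: "(\<exists>\<tau>. colifting sP mP uP sC \<rho> \<tau> \<and>
                   (\<forall>c. teq3 sH sP sP
                      (concat (map (\<lambda>(x, y). concat (map (\<lambda>(hx, x0).
                          map (\<lambda>(hy, y0). (mH hx hy, x0, y0)) (lco y)) (lco x))) (\<tau> c)))
                      (map (\<lambda>(x, y). (uH, x, y)) (\<tau> c))))
               \<or> (coalgebra_galois sP mP B sC \<rho> \<and> B \<subseteq> left_coinv sH uH sP lco)"
  shows "\<forall>c p. teq3 sH sP sC
           (concat (map (\<lambda>(p', c'). map (\<lambda>(h, x). (h, x, c')) (lco p')) (\<psi> c p)))
           (concat (map (\<lambda>(h, p0). map (\<lambda>(x, c'). (h, x, c')) (\<psi> c p0)) (lco p)))"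
proof (intro allI)
  fix c p
  interpret setting sH mH uH \<Delta>H \<epsilon>H S sC \<Delta>C \<epsilon>C sP mP uP \<psi> \<rho> lco
    using H ent entmod bicom comalg by unfold_locales
  have key: "\<exists>xs. (\<forall>\<Psi>. BL sP sC \<Psi> \<longrightarrow> tsum2 (\<lambda>x y. tsum2 (\<lambda>y0 y1. \<Psi> (mP x y0) y1) (\<rho> y)) xs = \<Psi> uP c) \<and>
     (\<forall>\<Gamma>. TL sH sP sP \<Gamma> \<longrightarrow> (\<forall>b\<in>coinv sP mP sC \<rho>. \<forall>h x y. \<Gamma> h (mP x b) y = \<Gamma> h x (mP b y)) \<longrightarrow>
       tsum2 (\<lambda>x y. tsum2 (\<lambda>hx x0. tsum2 (\<lambda>hy y0. \<Gamma> (mH hx hy) x0 y0) (lco y)) (lco x)) xs = tsum2 (\<Gamma> uH) xs)"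
    using cases
  proof
    assume "\<exists>\<tau>. colifting sP mP uP sC \<rho> \<tau> \<and>
                   (\<forall>c. teq3 sH sP sP
                      (concat (map (\<lambda>(x, y). concat (map (\<lambda>(hx, x0).
                          map (\<lambda>(hy, y0). (mH hx hy, x0, y0)) (lco y)) (lco x))) (\<tau> c)))
                      (map (\<lambda>(x, y). (uH, x, y)) (\<tau> c)))"
    then obtain \<tau> where col: "colifting sP mP uP sC \<rho> \<tau>" and t3: "\<And>c. teq3 sH sP sP
                      (concat (map (\<lambda>(x, y). concat (map (\<lambda>(hx, x0).
                          map (\<lambda>(hy, y0). (mH hx hy, x0, y0)) (lco y)) (lco x))) (\<tau> c)))
                      (map (\<lambda>(x, y). (uH, x, y)) (\<tau> c))" by blast
    show ?thesis
    proof (intro exI conjI allI impI)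
      fix \<Psi> assume \<Psi>: "BL sP sC \<Psi>"
      have "teq2 sP sC (concat (map (\<lambda>(x, y). map (\<lambda>(y0, y1). (mP x y0, y1)) (\<rho> y)) (\<tau> c))) [(uP, c)]"
        using col unfolding colifting_def by blast
      from teq2D[OF this vsP vsC \<Psi>]
      show "tsum2 (\<lambda>x y. tsum2 (\<lambda>y0 y1. \<Psi> (mP x y0) y1) (\<rho> y)) (\<tau> c) = \<Psi> uP c" by simp
    next
      fix \<Gamma> assume \<Gamma>: "TL sH sP sP \<Gamma>"
      from teq3D[OF t3[of c] vsH vsP vsP \<Gamma>]
      show "tsum2 (\<lambda>x y. tsum2 (\<lambda>hx x0. tsum2 (\<lambda>hy y0. \<Gamma> (mH hx hy) x0 y0) (lco y)) (lco x)) (\<tau> c) = tsum2 (\<Gamma> uH) (\<tau> c)"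
        by simp
    qed
  next
    assume b: "coalgebra_galois sP mP B sC \<rho> \<and> B \<subseteq> left_coinv sH uH sP lco"
    then obtain xs where xs: "teq2 sP sC (can_map mP \<rho> xs) [(uP, c)]"
      unfolding coalgebra_galois_def by blast
    have canx: "tsum2 (\<lambda>x y. tsum2 (\<lambda>y0 y1. \<Psi> (mP x y0) y1) (\<rho> y)) xs = \<Psi> uP c" if "BL sP sC \<Psi>" for \<Psi>
      using teq2D[OF xs vsP vsC that] by (simp add: CM)
    show ?thesis
    proof (intro exI conjI allI impI)
      fix \<Psi> assume \<Psi>: "BL sP sC \<Psi>"
      show "tsum2 (\<lambda>x y. tsum2 (\<lambda>y0 y1. \<Psi> (mP x y0) y1) (\<rho> y)) xs = \<Psi> uP c" by (rule canx[OF \<Psi>])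
    next
      fix \<Gamma> assume \<Gamma>: "TL sH sP sP \<Gamma>" and bal: "\<forall>b\<in>coinv sP mP sC \<rho>. \<forall>h x y. \<Gamma> h (mP x b) y = \<Gamma> h x (mP b y)"
      show "tsum2 (\<lambda>x y. tsum2 (\<lambda>hx x0. tsum2 (\<lambda>hy y0. \<Gamma> (mH hx hy) x0 y0) (lco y)) (lco x)) xs = tsum2 (\<Gamma> uH) xs"
        by (rule galois_ii[of B]) (use b canx \<Gamma> bal B_def in auto)
    qed
  qed
  then obtain xs where can: "\<And>\<Psi>. BL sP sC \<Psi> \<Longrightarrow> tsum2 (\<lambda>x y. tsum2 (\<lambda>y0 y1. \<Psi> (mP x y0) y1) (\<rho> y)) xs = \<Psi> uP c"
    and ii: "\<And>\<Gamma>. TL sH sP sP \<Gamma> \<Longrightarrow> (\<forall>b\<in>coinv sP mP sC \<rho>. \<forall>h x y. \<Gamma> h (mP x b) y = \<Gamma> h x (mP b y)) \<Longrightarrow>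
       tsum2 (\<lambda>x y. tsum2 (\<lambda>hx x0. tsum2 (\<lambda>hy y0. \<Gamma> (mH hx hy) x0 y0) (lco y)) (lco x)) xs = tsum2 (\<Gamma> uH) xs"
    by blast
  show "teq3 sH sP sC
           (concat (map (\<lambda>(p', c'). map (\<lambda>(h, x). (h, x, c')) (lco p')) (\<psi> c p)))
           (concat (map (\<lambda>(h, p0). map (\<lambda>(x, c'). (h, x, c')) (\<psi> c p0)) (lco p)))"
    unfolding teq3_def
  proof (intro allI impI)
    fix \<Phi> assume "trilinear_form sH sP sC \<Phi>"
    then have \<Phi>: "TL sH sP sC \<Phi>" using vsH vsP vsC by (simp add: trilinear_TL)
    from core[OF can ii \<Phi>, of p]
    show "tsum3 \<Phi> (concat (map (\<lambda>(p', c'). map (\<lambda>(h, x). (h, x, c')) (lco p')) (\<psi> c p))) =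
          tsum3 \<Phi> (concat (map (\<lambda>(h, p0). map (\<lambda>(x, c'). (h, x, c')) (\<psi> c p0)) (lco p)))"
      by simp
  qed
qed

end
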